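(* Let $D\ge 1$ and let $\mathcal{X}=\{\boldsymbol{x}_1,\dots,\boldsymbol{x}_n\}\subset\mathbb{R}^D$ be a dataset (points counted with multiplicity), and let $\mathcal{Y}\subset\mathcal{X}$ be a sub-collection such that: (i) $\#(\mathcal{Y})>n-n/(2D+2)$; (ii) there is a nonzero $\boldsymbol{v}\in\mathbb{R}^D$ with $\mathcal{Y}\subset\overline{H(\boldsymbol{0},\boldsymbol{v})}=\{\boldsymbol{x}:\boldsymbol{v}^\top\boldsymbol{x}\ge 0\}$; (iii) $\mathcal{Y}\cap L(\boldsymbol{0},\boldsymbol{v})$ is either $\{\boldsymbol{0}\}$ or empty, where $L(\boldsymbol{0},\boldsymbol{v})=\{\boldsymbol{x}:\boldsymbol{v}^\top\boldsymbol{x}=0\}$. Then $$\mathrm{relint}\big(\mathcal{D}_{1/(2D+2)}(\mathcal{X})\big)\subset\mathrm{conv}(\mathcal{Y})\subset H(\boldsymbol{0},\boldsymbol{v})\cup\{\boldsymbol{0}\},$$ where $H(\boldsymbol{0},\boldsymbol{v})=\{\boldsymbol{x}:\boldsymbol{v}^\top\boldsymbol{x}>0\}$. Moreover, if $\#(\mathcal{Y}\cap L(\boldsymbol{0},\boldsymbol{v}))<n/2$ (counted with multiplicity), then $\mathrm{relint}\big(\mathcal{D}_{1/(2D+2)}(\mathcal{X})\big)\subset H(\boldsymbol{0},\boldsymbol{v})$.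
   Context: Tukey depth of $\boldsymbol{x}\in\mathbb{R}^D$ in $\mathcal{X}=\{\boldsymbol{x}_1,\dots,\boldsymbol{x}_n\}$: $\mathrm{depth}(\boldsymbol{x},\mathcal{X})=\min_{\boldsymbol{u}\in S^{D-1}}\#\{i:\boldsymbol{u}^\top(\boldsymbol{x}_i-\boldsymbol{x})\ge 0\}$. The $\beta$-depth level set is $\mathcal{D}_\beta(\mathcal{X})=\{\boldsymbol{y}\in\mathbb{R}^D:\mathrm{depth}(\boldsymbol{y},\mathcal{X})\ge\beta\,\#(\mathcal{X})\}$. $\mathrm{conv}$ denotes convex hull and $\mathrm{relint}$ relative interior. *)

theory Defs
  imports "HOL-Analysis.Analysis"
begin

text \<open>A dataset with multiplicity is an indexed family x over a finite index set I.
  Tukey depth of y: minimum over unit vectors u of the number of indices i with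
  u \<bullet> (x i - y) \<ge> 0.\<close>

definition tukey_depth :: "'i set \<Rightarrow> ('i \<Rightarrow> 'a::euclidean_space) \<Rightarrow> 'a \<Rightarrow> nat" where
  "tukey_depth I x y = Inf {card {i \<in> I. u \<bullet> (x i - y) \<ge> 0} | u. norm u = 1}"

definition depth_level_set :: "real \<Rightarrow> 'i set \<Rightarrow> ('i \<Rightarrow> 'a::euclidean_space) \<Rightarrow> 'a set" where
  "depth_level_set \<beta> I x = {y. real (tukey_depth I x y) \<ge> \<beta> * real (card I)}"

end

theory Submission
  imports Defs
begin


lemma Helly_gen:
  fixes \<F> :: "'a::euclidean_space set set" and A :: "'a set" and d :: nat
  assumes "finite \<F>" "\<F> \<noteq> {}" "\<forall>S\<in>\<F>. convex S \<and> S \<subseteq> A"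
    and dep: "\<forall>S. finite S \<and> S \<subseteq> A \<and> card S \<ge> d + 2 \<longrightarrow> affine_dependent S"
    and sub: "\<forall>T. T \<subseteq> \<F> \<and> T \<noteq> {} \<and> card T \<le> d + 1 \<longrightarrow> \<Inter>T \<noteq> {}"
  shows "\<Inter>\<F> \<noteq> {}"
  using assms(1-3) sub
proof (induction "card \<F>" arbitrary: \<F> rule: less_induct)
  case less
  show ?case
  proof (cases "card \<F> \<le> d + 1")
    case True
    then show ?thesis using less.prems by blast
  next
    case False
    have ne: "\<F> - {S} \<noteq> {}" for S
    proof
      assume "\<F> - {S} = {}"
      then have "\<F> \<subseteq> {S}" by blast
      then have "card \<F> \<le> 1" using card_mono[of "{S}" \<F>] by simp
      then show False using False by linarith
    qed
    have "\<Inter>(\<F> - {S}) \<noteq> {}" if "S \<in> \<F>" for S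
    proof (rule less.hyps)
      show "card (\<F> - {S}) < card \<F>" using that less.prems(1)
        by (meson card_Diff1_less)
      show "finite (\<F> - {S})" using less.prems(1) by auto
      show "\<F> - {S} \<noteq> {}"
        by (rule ne)
      show "\<forall>S\<in>\<F> - {S}. convex S \<and> S \<subseteq> A" using less.prems(3) by auto
      show "\<forall>T. T \<subseteq> \<F> - {S} \<and> T \<noteq> {} \<and> card T \<le> d + 1 \<longrightarrow> \<Inter> T \<noteq> {}"
        using less.prems(4) by blast
    qed
    then have "\<forall>S\<in>\<F>. \<exists>x. x \<in> \<Inter>(\<F> - {S})"
      by blast
    then obtain X where X: "\<And>S. S\<in>\<F> \<Longrightarrow> X S \<in> \<Inter>(\<F> - {S})"
      by metis
    have XA: "X S \<in> A" if "S \<in> \<F>" for S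
    proof -
      obtain T where "T \<in> \<F> - {S}" using ne by blast
      then show ?thesis using X[OF that] less.prems(3) by blast
    qed
    show ?thesis
    proof (cases "inj_on X \<F>")
      case False
      then obtain S T where "S\<noteq>T" and st: "S\<in>\<F>" "T\<in>\<F>" "X S = X T"
        unfolding inj_on_def by auto
      then have *: "\<Inter>\<F> = \<Inter>(\<F> - {S}) \<inter> \<Inter>(\<F> - {T})" by auto
      show ?thesis
        by (metis "*" X disjoint_iff_not_equal st)
    next
      case True
      have XFA: "X ` \<F> \<subseteq> A" using XA by blast
      have "card (X ` \<F>) \<ge> d + 2" using False card_image[OF True] by simp
      then have "affine_dependent (X ` \<F>)"
        using dep XFA less.prems(1) by blast
      then obtain M P where mp: "M \<inter> P = {}" "M \<union> P = X ` \<F>" "convex hull M \<inter> convex hull P \<noteq> {}"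
        using Radon_partition[of "X ` \<F>"] less.prems(1) by auto
      have "M \<subseteq> X ` \<F>" "P \<subseteq> X ` \<F>"
        using mp(2) by auto
      then obtain \<G> \<H> where gh:"M = X ` \<G>" "P = X ` \<H>" "\<G> \<subseteq> \<F>" "\<H> \<subseteq> \<F>"
        unfolding subset_image_iff by auto
      then have "\<F> \<union> (\<G> \<union> \<H>) = \<F>" by auto
      then have \<F>: "\<F> = \<G> \<union> \<H>"
        using inj_on_Un_image_eq_iff[of X \<F> "\<G> \<union> \<H>"] and True
        unfolding mp(2)[unfolded image_Un[symmetric] gh]
        by auto
      have *: "\<G> \<inter> \<H> = {}"
        using gh mp(1) by blast
      have "convex hull (X ` \<H>) \<subseteq> \<Inter>\<G>" "convex hull (X ` \<G>) \<subseteq> \<Inter>\<H>"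
        by (rule hull_minimal; use X * \<F> less.prems(3) in \<open>auto simp: convex_Inter\<close>)+
      then show ?thesis
        unfolding \<F> using mp(3)[unfolded gh] by blast
    qed
  qed
qed

lemma hyperplane_dep:
  fixes v :: "'a::euclidean_space"
  assumes "v \<noteq> 0" "finite S" "S \<subseteq> {w. v \<bullet> w = 1}" "card S \<ge> (DIM('a) - 1) + 2"
  shows "affine_dependent S"
proof (rule ccontr)
  assume "\<not> affine_dependent S"
  then have "int (card S) = aff_dim S + 1" by (rule aff_dim_affine_independent)
  moreover have "aff_dim S \<le> aff_dim {w. v \<bullet> w = 1}" using assms(3) by (rule aff_dim_subset)
  moreover have "aff_dim {w. v \<bullet> w = 1} = int (DIM('a) - 1)" using assms(1) by simp
  ultimately show False using assms(4) DIM_positive[where 'a='a] by linarith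
qed

lemma depth_attained:
  fixes x :: "'i \<Rightarrow> 'a::euclidean_space"
  shows "\<exists>u. norm u = 1 \<and> tukey_depth I x y = card {i \<in> I. u \<bullet> (x i - y) \<ge> 0}"
proof -
  obtain b :: 'a where "b \<in> Basis" using nonempty_Basis by blast
  then have "{card {i \<in> I. u \<bullet> (x i - y) \<ge> 0} | u. norm u = 1} \<noteq> {}"
    using norm_Basis by blast
  from Inf_nat_def1[OF this] show ?thesis unfolding tukey_depth_def by auto
qed

lemma depth_le:
  fixes x :: "'i \<Rightarrow> 'a::euclidean_space"
  assumes "u \<noteq> 0"
  shows "tukey_depth I x y \<le> card {i \<in> I. u \<bullet> (x i - y) \<ge> 0}"
proof -
  define w where "w = u /\<^sub>R norm u"
  have nw: "norm w = 1" using assms by (simp add: w_def)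
  have eq: "{i \<in> I. w \<bullet> (x i - y) \<ge> 0} = {i \<in> I. u \<bullet> (x i - y) \<ge> 0}"
    using assms by (auto simp: w_def zero_le_mult_iff)
  have "tukey_depth I x y \<le> card {i \<in> I. w \<bullet> (x i - y) \<ge> 0}"
    unfolding tukey_depth_def using nw by (intro cInf_lower) auto
  then show ?thesis using eq by simp
qed


theorem lemma3:
  fixes x :: "nat \<Rightarrow> 'a::euclidean_space" and n :: nat and J :: "nat set" and v :: 'a
  defines "D \<equiv> real DIM('a)"
  assumes J_sub: "J \<subseteq> {..<n}"
    and J_card: "real (card J) > real n - real n / (2 * D + 2)"
    and v_nz: "v \<noteq> 0"
    and J_half: "\<forall>j\<in>J. v \<bullet> x j \<ge> 0"
    and J_line: "\<forall>j\<in>J. v \<bullet> x j = 0 \<longrightarrow> x j = 0"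
  shows "rel_interior (depth_level_set (1 / (2 * D + 2)) {..<n} x) \<subseteq> convex hull (x ` J)
       \<and> convex hull (x ` J) \<subseteq> {y. v \<bullet> y > 0} \<union> {0}
       \<and> (real (card {j\<in>J. v \<bullet> x j = 0}) < real n / 2 \<longrightarrow>
            rel_interior (depth_level_set (1 / (2 * D + 2)) {..<n} x) \<subseteq> {y. v \<bullet> y > 0})"
proof -
  define D\<beta> where "D\<beta> = depth_level_set (1 / (2 * D + 2)) {..<n} x"
  have D1: "D \<ge> 1" using DIM_positive[where 'a='a] by (simp add: D_def)
  have memD: "y \<in> D\<beta> \<longleftrightarrow> real (tukey_depth {..<n} x y) \<ge> 1 / (2 * D + 2) * real n" for y
    by (simp add: D\<beta>_def depth_level_set_def)
  have finJ: "finite J" using J_sub finite_subset by blast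
  have cJn: "card J \<le> n" using card_mono[OF finite_lessThan J_sub] by simp
  have nle: "real n / (2 * D + 2) \<le> real n" using D1 by (simp add: field_simps)
  have Jne: "J \<noteq> {}"
  proof
    assume "J = {}"
    then show False using J_card nle by simp
  qed
  have S1: "D\<beta> \<subseteq> convex hull (x ` J)"
  proof
    fix y assume y: "y \<in> D\<beta>"
    then have yd: "real (tukey_depth {..<n} x y) \<ge> 1 / (2 * D + 2) * real n" by (simp add: memD)
    show "y \<in> convex hull (x ` J)"
    proof (rule ccontr)
      assume ny: "y \<notin> convex hull (x ` J)"
      have cl: "closed (convex hull (x ` J))"
        by (intro compact_imp_closed finite_imp_compact_convex_hull) (simp add: finJ)
      obtain a b where ab: "a \<bullet> y < b" "\<forall>w\<in>convex hull (x ` J). a \<bullet> w > b"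
        using separating_hyperplane_closed_point[OF convex_convex_hull cl ny] by blast
      obtain j where "j \<in> J" using Jne by blast
      then have "a \<bullet> x j > b" using ab(2) hull_inc by (metis image_eqI)
      then have anz: "-a \<noteq> 0" using ab(1) by auto
      have sub: "{i \<in> {..<n}. (-a) \<bullet> (x i - y) \<ge> 0} \<subseteq> {..<n} - J"
      proof
        fix i assume i: "i \<in> {i \<in> {..<n}. (-a) \<bullet> (x i - y) \<ge> 0}"
        have "i \<notin> J"
        proof
          assume "i \<in> J"
          then have "a \<bullet> x i > b" using ab(2) hull_inc by (metis image_eqI)
          then show False using i ab(1) by (simp add: inner_diff_right)
        qed
        then show "i \<in> {..<n} - J" using i by auto
      qed
      have "tukey_depth {..<n} x y \<le> card ({..<n} - J)"
        using depth_le[OF anz, of "{..<n}" x y] card_mono[OF _ sub] by simp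
      also have "card ({..<n} - J) = n - card J" using card_Diff_subset[OF finJ J_sub] by simp
      finally have "real (tukey_depth {..<n} x y) \<le> real n - real (card J)"
        using cJn by (simp add: of_nat_diff)
      then show False using yd J_card by simp
    qed
  qed
  define S where "S = {y. v \<bullet> y \<ge> 0 \<and> (v \<bullet> y = 0 \<longrightarrow> y = 0)}"
  have convS: "convex S"
  proof (rule convexI)
    fix a b :: 'a and u w :: real
    assume a: "a \<in> S" and b: "b \<in> S" and u: "0 \<le> u" and w: "0 \<le> w" and uw: "u + w = 1"
    have va: "v \<bullet> a \<ge> 0" "v \<bullet> a = 0 \<longrightarrow> a = 0" using a by (auto simp: S_def)
    have vb: "v \<bullet> b \<ge> 0" "v \<bullet> b = 0 \<longrightarrow> b = 0" using b by (auto simp: S_def)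
    have e: "v \<bullet> (u *\<^sub>R a + w *\<^sub>R b) = u * (v \<bullet> a) + w * (v \<bullet> b)"
      by (simp add: inner_add_right)
    have n1: "u * (v \<bullet> a) \<ge> 0" "w * (v \<bullet> b) \<ge> 0" using u w va vb by auto
    have "v \<bullet> (u *\<^sub>R a + w *\<^sub>R b) = 0 \<longrightarrow> u *\<^sub>R a + w *\<^sub>R b = 0"
    proof
      assume "v \<bullet> (u *\<^sub>R a + w *\<^sub>R b) = 0"
      then have "u * (v \<bullet> a) = 0" "w * (v \<bullet> b) = 0" using e n1 by linarith+
      then have "u *\<^sub>R a = 0" "w *\<^sub>R b = 0" using va vb by auto
      then show "u *\<^sub>R a + w *\<^sub>R b = 0" by auto
    qed
    then show "u *\<^sub>R a + w *\<^sub>R b \<in> S" using e n1 by (simp add: S_def)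
  qed
  have S2: "convex hull (x ` J) \<subseteq> S"
    by (rule hull_minimal) (use J_half J_line convS in \<open>auto simp: S_def\<close>)
  have S2': "convex hull (x ` J) \<subseteq> {y. v \<bullet> y > 0} \<union> {0}"
    using S2 by (force simp: S_def)
  have S3: "rel_interior D\<beta> \<subseteq> {y. v \<bullet> y > 0}"
    if zh: "real (card {j\<in>J. v \<bullet> x j = 0}) < real n / 2"
  proof
    fix y assume yr: "y \<in> rel_interior D\<beta>"
    then have yD: "y \<in> D\<beta>" using rel_interior_subset by blast
    then have yS: "y \<in> S" using S1 S2 by blast
    show "y \<in> {y. v \<bullet> y > 0}"
    proof (rule ccontr)
      assume "y \<notin> {y. v \<bullet> y > 0}"
      then have y0: "y = 0" using yS by (auto simp: S_def)
      have zD: "0 \<in> D\<beta>" using yD y0 by simp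
      define P where "P = {j\<in>J. v \<bullet> x j > 0}"
      define m where "m = card P"
      have finP: "finite P" using finJ by (simp add: P_def)
      have PJ: "P \<subseteq> J" by (auto simp: P_def)
      have Jsplit: "J = P \<union> {j\<in>J. v \<bullet> x j = 0}" using J_half by (auto simp: P_def less_le)
      have "card J = m + card {j\<in>J. v \<bullet> x j = 0}"
        unfolding m_def by (subst Jsplit, rule card_Un_disjoint) (use finJ in \<open>auto simp: P_def\<close>)
      then have "real m > real n - real n / (2 * D + 2) - real n / 2" using J_card zh by linarith
      also have "real n - real n / (2 * D + 2) - real n / 2 = real n * D / (2 * D + 2)"
        using D1 by (simp add: field_simps)
      finally have mbig: "real m * (2 * D + 2) > real n * D"
        using D1 by (simp add: pos_divide_less_eq)
      have mpos: "m > 0"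
      proof (rule ccontr)
        assume "\<not> m > 0"
        then have "m = 0" by simp
        moreover have "real n * D \<ge> 0" using D1 by simp
        ultimately show False using mbig by simp
      qed
      have Pne: "P \<noteq> {}" using mpos by (auto simp: m_def)
      define p where "p j = x j /\<^sub>R (v \<bullet> x j)" for j
      define A where "A = {w. v \<bullet> w = 1}"
      have pA: "p j \<in> A" if "j \<in> P" for j using that by (simp add: p_def A_def P_def)
      define good where "good = {Q. Q \<subseteq> P \<and> real (card (P - Q)) * D < real m}"
      define Fam where "Fam = (\<lambda>Q. convex hull (p ` Q)) ` good"
      have fingood: "finite good" using finP by (simp add: good_def)
      have finFam: "finite Fam" using fingood by (simp add: Fam_def)
      have Pgood: "P \<in> good" using mpos by (simp add: good_def)
      have FamNE: "Fam \<noteq> {}" using Pgood by (auto simp: Fam_def)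
      have FamA: "\<forall>K\<in>Fam. convex K \<and> K \<subseteq> A"
      proof
        fix K assume "K \<in> Fam"
        then obtain Q where Q: "Q \<in> good" "K = convex hull (p ` Q)" by (auto simp: Fam_def)
        have "convex hull (p ` Q) \<subseteq> A"
          by (rule hull_minimal) (use Q pA in \<open>auto simp: good_def A_def convex_hyperplane\<close>)
        then show "convex K \<and> K \<subseteq> A" using Q by simp
      qed
      have dep: "\<forall>S. finite S \<and> S \<subseteq> A \<and> card S \<ge> (DIM('a) - 1) + 2 \<longrightarrow> affine_dependent S"
        using hyperplane_dep[OF v_nz] by (auto simp: A_def)
      have subI: "\<forall>T. T \<subseteq> Fam \<and> T \<noteq> {} \<and> card T \<le> (DIM('a) - 1) + 1 \<longrightarrow> \<Inter>T \<noteq> {}"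
      proof (intro allI impI)
        fix T assume T: "T \<subseteq> Fam \<and> T \<noteq> {} \<and> card T \<le> DIM('a) - 1 + 1"
        then obtain U where U: "U \<subseteq> good" "inj_on (\<lambda>Q. convex hull (p ` Q)) U"
            "T = (\<lambda>Q. convex hull (p ` Q)) ` U"
          unfolding Fam_def subset_image_inj by blast
        have finU: "finite U" using U(1) fingood finite_subset by blast
        have Une: "U \<noteq> {}" using T U by auto
        have cardU: "card U = card T" using card_image[OF U(2)] U(3) by simp
        have "card U \<le> DIM('a)" using T cardU DIM_positive[where 'a='a] by linarith
        then have cardUD: "real (card U) \<le> D" by (simp add: D_def)
        have "(\<Sum>Q\<in>U. real (card (P - Q)) * D) < (\<Sum>Q\<in>U. real m)"
          by (rule sum_strict_mono[OF finU Une]) (use U(1) in \<open>auto simp: good_def\<close>)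
        also have "\<dots> = real (card U) * real m" by simp
        also have "\<dots> \<le> D * real m" using cardUD by (simp add: mult_right_mono)
        finally have A: "(\<Sum>Q\<in>U. real (card (P - Q)) * D) < D * real m" .
        have eq: "(\<Sum>Q\<in>U. real (card (P - Q)) * D) = (\<Sum>Q\<in>U. real (card (P - Q))) * D"
          by (rule sum_distrib_right[symmetric])
        have "(\<Sum>Q\<in>U. real (card (P - Q))) * D < D * real m" using A eq by linarith
        then have "(\<Sum>Q\<in>U. real (card (P - Q))) * D < real m * D" by (metis mult.commute)
        moreover have "0 \<le> D" using D1 by simp
        ultimately have sumlt: "(\<Sum>Q\<in>U. real (card (P - Q))) < real m"
          by (rule mult_right_less_imp_less)
        have "card (\<Union>Q\<in>U. P - Q) \<le> (\<Sum>Q\<in>U. card (P - Q))" by (rule card_UN_le[OF finU])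
        then have "real (card (\<Union>Q\<in>U. P - Q)) \<le> real (\<Sum>Q\<in>U. card (P - Q))"
          by (simp only: of_nat_le_iff)
        also have "\<dots> = (\<Sum>Q\<in>U. real (card (P - Q)))" by simp
        finally have "real (card (\<Union>Q\<in>U. P - Q)) < real m" using sumlt by linarith
        then have lt: "card (\<Union>Q\<in>U. P - Q) < card P" by (simp add: m_def)
        have "\<not> P \<subseteq> (\<Union>Q\<in>U. P - Q)"
        proof
          assume "P \<subseteq> (\<Union>Q\<in>U. P - Q)"
          then have "card P \<le> card (\<Union>Q\<in>U. P - Q)"
            by (rule card_mono[rotated]) (use finP in auto)
          then show False using lt by simp
        qed
        then obtain j where j: "j \<in> P" "\<forall>Q\<in>U. j \<in> Q" by blast
        have "p j \<in> K" if K: "K \<in> T" for K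
        proof -
          obtain Q where Q: "Q \<in> U" "K = convex hull (p ` Q)" using K U(3) by blast
          have "j \<in> Q" using j(2) Q(1) by simp
          then have "p j \<in> p ` Q" by (rule imageI)
          then show ?thesis unfolding Q(2) by (rule hull_inc)
        qed
        then have "p j \<in> \<Inter>T" by blast
        then show "\<Inter>T \<noteq> {}" by blast
      qed
      obtain c0 where c0: "c0 \<in> \<Inter>Fam"
        using Helly_gen[OF finFam FamNE FamA dep subI] by blast
      have "convex hull (p ` P) \<in> Fam" using Pgood by (simp add: Fam_def)
      then have c0A: "v \<bullet> c0 = 1" using c0 FamA by (auto simp: A_def)
      have key: "real (card {j\<in>P. u \<bullet> p j \<ge> u \<bullet> c0}) * D \<ge> real m" for u
      proof (rule ccontr)
        assume nk: "\<not> real (card {j\<in>P. u \<bullet> p j \<ge> u \<bullet> c0}) * D \<ge> real m"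
        define Q where "Q = {j\<in>P. u \<bullet> p j < u \<bullet> c0}"
        have "P - Q = {j\<in>P. u \<bullet> p j \<ge> u \<bullet> c0}" by (auto simp: Q_def)
        then have "Q \<in> good" using nk by (auto simp: good_def Q_def)
        then have "c0 \<in> convex hull (p ` Q)" using c0 by (auto simp: Fam_def)
        moreover have "convex hull (p ` Q) \<subseteq> {w. u \<bullet> w < u \<bullet> c0}"
          by (rule hull_minimal) (auto simp: Q_def convex_halfspace_lt)
        ultimately show False by auto
      qed
      define t where "t = Min ((\<lambda>j. v \<bullet> x j) ` P)"
      have tpos: "t > 0"
      proof -
        have "t \<in> (\<lambda>j. v \<bullet> x j) ` P" unfolding t_def using finP Pne by (intro Min_in) auto
        then show ?thesis by (auto simp: P_def)
      qed
      have tle: "t \<le> v \<bullet> x j" if "j \<in> P" for j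
        unfolding t_def using finP that by (intro Min_le) auto
      define c where "c = t *\<^sub>R c0"
      have vc: "v \<bullet> c = t" by (simp add: c_def c0A)
      have d0: "real (tukey_depth {..<n} x 0) \<ge> 1 / (2 * D + 2) * real n" using zD by (simp add: memD)
      have cD: "c \<in> D\<beta>"
      proof -
        obtain u where u: "norm u = 1"
          "tukey_depth {..<n} x c = card {i \<in> {..<n}. u \<bullet> (x i - c) \<ge> 0}"
          using depth_attained by blast
        have unz: "u \<noteq> 0" using u by auto
        have "real (card {i \<in> {..<n}. u \<bullet> (x i - c) \<ge> 0}) \<ge> 1 / (2 * D + 2) * real n"
        proof (cases "u \<bullet> c \<le> 0")
          case True
          have "{i\<in>{..<n}. u \<bullet> (x i - 0) \<ge> 0} \<subseteq> {i \<in> {..<n}. u \<bullet> (x i - c) \<ge> 0}"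
            using True by (auto simp: inner_diff_right)
          then have "card {i\<in>{..<n}. u \<bullet> (x i - 0) \<ge> 0} \<le> card {i \<in> {..<n}. u \<bullet> (x i - c) \<ge> 0}"
            by (intro card_mono) auto
          moreover have "tukey_depth {..<n} x 0 \<le> card {i\<in>{..<n}. u \<bullet> (x i - 0) \<ge> 0}"
            by (rule depth_le[OF unz])
          ultimately have "tukey_depth {..<n} x 0 \<le> card {i \<in> {..<n}. u \<bullet> (x i - c) \<ge> 0}"
            by linarith
          then have "real (tukey_depth {..<n} x 0) \<le> real (card {i \<in> {..<n}. u \<bullet> (x i - c) \<ge> 0})"
            by simp
          then show ?thesis using d0 by linarith
        next
          case False
          then have "t * (u \<bullet> c0) > 0" by (simp add: c_def)
          then have uc0: "u \<bullet> c0 > 0" using tpos by (simp add: zero_less_mult_iff)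
          have "{j\<in>P. u \<bullet> p j \<ge> u \<bullet> c0} \<subseteq> {i \<in> {..<n}. u \<bullet> (x i - c) \<ge> 0}"
          proof
            fix j assume j: "j \<in> {j\<in>P. u \<bullet> p j \<ge> u \<bullet> c0}"
            then have jP: "j \<in> P" and h: "u \<bullet> p j \<ge> u \<bullet> c0" by auto
            have vx: "v \<bullet> x j > 0" using jP by (simp add: P_def)
            have "x j = (v \<bullet> x j) *\<^sub>R p j" using vx by (simp add: p_def)
            then have "u \<bullet> x j = (v \<bullet> x j) * (u \<bullet> p j)" by (metis inner_scaleR_right)
            also have "\<dots> \<ge> (v \<bullet> x j) * (u \<bullet> c0)" using h vx by (simp add: mult_left_mono)
            finally have "u \<bullet> x j \<ge> (v \<bullet> x j) * (u \<bullet> c0)" .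
            moreover have "(v \<bullet> x j) * (u \<bullet> c0) \<ge> t * (u \<bullet> c0)"
              using tle[OF jP] uc0 by (simp add: mult_right_mono)
            ultimately have "u \<bullet> x j \<ge> u \<bullet> c" by (simp add: c_def)
            moreover have "j \<in> {..<n}" using jP PJ J_sub by auto
            ultimately show "j \<in> {i \<in> {..<n}. u \<bullet> (x i - c) \<ge> 0}" by (simp add: inner_diff_right)
          qed
          then have "card {j\<in>P. u \<bullet> p j \<ge> u \<bullet> c0} \<le> card {i \<in> {..<n}. u \<bullet> (x i - c) \<ge> 0}"
            by (intro card_mono) auto
          then have r: "real (card {j\<in>P. u \<bullet> p j \<ge> u \<bullet> c0}) \<le> real (card {i \<in> {..<n}. u \<bullet> (x i - c) \<ge> 0})"
            by simp
          define cc where "cc = real (card {i \<in> {..<n}. u \<bullet> (x i - c) \<ge> 0})"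
          have "cc * D \<ge> real m"
          proof -
            have "real (card {j\<in>P. u \<bullet> p j \<ge> u \<bullet> c0}) * D \<le> cc * D"
              using r D1 unfolding cc_def by (intro mult_right_mono) auto
            then show ?thesis using key[of u] by linarith
          qed
          then have "cc * D * (2 * D + 2) \<ge> real m * (2 * D + 2)"
            using D1 by (simp add: mult_right_mono)
          then have "D * (cc * (2 * D + 2)) > D * real n" using mbig by (simp add: algebra_simps)
          then have "cc * (2 * D + 2) > real n" using D1 by (simp add: mult_less_cancel_left_pos)
          then have "1 / (2 * D + 2) * real n \<le> cc" using D1 by (simp add: field_simps)
          then show ?thesis by (simp add: cc_def)
        qed
        then show ?thesis using u by (simp add: memD)
      qed
      obtain e where e: "e > 0" "cball 0 e \<inter> affine hull D\<beta> \<subseteq> D\<beta>"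
        using yr y0 mem_rel_interior_cball by blast
      have cnz: "c \<noteq> 0" using vc tpos by auto
      define s where "s = - (e / norm c)"
      define w where "w = s *\<^sub>R c"
      have "w \<in> cball 0 e" using cnz e(1) by (simp add: w_def s_def)
      moreover have "w \<in> affine hull D\<beta>"
      proof -
        have "(1 - s) *\<^sub>R 0 + s *\<^sub>R c \<in> affine hull D\<beta>"
          by (rule mem_affine[OF affine_affine_hull]) (use zD cD hull_inc in auto)
        then show ?thesis by (simp add: w_def)
      qed
      ultimately have "w \<in> D\<beta>" using e(2) by blast
      then have "w \<in> S" using S1 S2 by blast
      moreover have "v \<bullet> w < 0" using cnz e(1) tpos vc
        by (simp add: w_def s_def mult_neg_pos)
      ultimately show False by (auto simp: S_def)
    qed
  qed
  show ?thesis
    using S1 S2' S3 rel_interior_subset[of D\<beta>] unfolding D\<beta>_def by blast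
qed

end
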